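(* Let $A\in\mathbb{R}^{n\times n}$ be symmetric with orthonormal eigenbasis $\vec{q}_1,\dots,\vec{q}_n$, $A\vec{q}_i=\lambda_i\vec{q}_i$, let $s$ be the number of distinct eigenvalues of $A$, and let $\vec{x}_0\in\mathbb{R}^n$ satisfy $\vec{q}_i^\top\vec{x}_0\neq 0$ for all $i$. Let $\vec{x}_{t+1}=A\vec{x}_t$, $X_k=[\vec{x}_0\ \cdots\ \vec{x}_k]$, $Y_k=[\vec{x}_1\ \cdots\ \vec{x}_{k+1}]$ and $\hat{A}_k=Y_kX_k^{\dagger}$. Assume $A$ has at least one eigenvalue of algebraic multiplicity greater than one, and let $\lambda^*=\max_{i:\,m(\lambda_i)>1}|\lambda_i|$. If $k\ge s$, then $\|A-\hat{A}_k\|_2=\lambda^*$.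
   Context: $m(\lambda)$ denotes the algebraic multiplicity of the eigenvalue $\lambda$; $M^{\dagger}$ is the Moore–Penrose pseudo-inverse; $\|\cdot\|_2$ is the spectral norm. *)

theory Defs
  imports "Jordan_Normal_Form.Char_Poly" "HOL-Computational_Algebra.Polynomial"
begin

definition alg_mult :: "real mat \<Rightarrow> real \<Rightarrow> nat" where
  "alg_mult A lam = order lam (char_poly A)"

definition pinv :: "real mat \<Rightarrow> real mat" where
  "pinv M = (THE P. P \<in> carrier_mat (dim_col M) (dim_row M) \<and>
      M * P * M = M \<and> P * M * P = P \<and>
      transpose_mat (M * P) = M * P \<and> transpose_mat (P * M) = P * M)"

definition vnorm :: "real vec \<Rightarrow> real" where
  "vnorm v = sqrt (v \<bullet> v)"

definition spec_norm :: "real mat \<Rightarrow> real" where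
  "spec_norm M = Sup {vnorm (M *\<^sub>v v) | v. v \<in> carrier_vec (dim_col M) \<and> vnorm v = 1}"

end

theory Submission
  imports Defs
begin

lemma mp_unique:
  fixes M P1 P2 :: "real mat"
  assumes M: "M \<in> carrier_mat m p" and P1: "P1 \<in> carrier_mat p m" and P2: "P2 \<in> carrier_mat p m"
    and a1: "M * P1 * M = M" and b1: "P1 * M * P1 = P1" and c1: "transpose_mat (M * P1) = M * P1"
    and d1: "transpose_mat (P1 * M) = P1 * M"
    and a2: "M * P2 * M = M" and b2: "P2 * M * P2 = P2" and c2: "transpose_mat (M * P2) = M * P2"
    and d2: "transpose_mat (P2 * M) = P2 * M"
  shows "P1 = P2"
proof -
  have MP1: "M * P1 \<in> carrier_mat m m" "M * P2 \<in> carrier_mat m m" using M P1 P2 by auto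
  have TT: "transpose_mat M \<in> carrier_mat p m" "transpose_mat P1 \<in> carrier_mat m p" "transpose_mat P2 \<in> carrier_mat m p"
    using M P1 P2 by auto
  have PM: "P1 * M \<in> carrier_mat p p" "P2 * M \<in> carrier_mat p p" using M P1 P2 by auto
  have tM1: "transpose_mat M = transpose_mat M * (M * P2)"
  proof -
    have "transpose_mat M = transpose_mat (M * P2 * M)" using a2 by simp
    also have "\<dots> = transpose_mat M * transpose_mat (M * P2)" by (rule transpose_mult[OF MP1(2) M])
    finally show ?thesis using c2 by simp
  qed
  have tM2: "transpose_mat M = (P1 * M) * transpose_mat M"
  proof -
    have "transpose_mat M = transpose_mat (M * (P1 * M))" using a1 M P1 by simp
    also have "\<dots> = transpose_mat (P1 * M) * transpose_mat M" by (rule transpose_mult[OF M PM(1)])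
    finally show ?thesis using d1 by simp
  qed
  have e1: "P1 = P1 * M * P2"
  proof -
    have "P1 = P1 * (M * P1)" using b1 M P1 by simp
    also have "\<dots> = P1 * (transpose_mat P1 * transpose_mat M)" using c1 transpose_mult[OF M P1] by simp
    also have "\<dots> = P1 * (transpose_mat P1 * (transpose_mat M * (M * P2)))" using tM1 by simp
    also have "\<dots> = P1 * ((transpose_mat P1 * transpose_mat M) * (M * P2))" using assoc_mult_mat[OF TT(2) TT(1) MP1(2)] by simp
    also have "\<dots> = P1 * ((M * P1) * (M * P2))" using c1 transpose_mult[OF M P1] by simp
    also have "\<dots> = (P1 * M * P1) * M * P2" by (simp only: assoc_mult_mat[OF mult_carrier_mat[OF P1 MP1(1)] M P2] assoc_mult_mat[OF P1 MP1(1) MP1(2)] assoc_mult_mat[OF PM(1) P1 MP1(2)] assoc_mult_mat[OF P1 M P1] assoc_mult_mat[OF mult_carrier_mat[OF PM(1) P1] M P2] assoc_mult_mat[OF M P1 MP1(2)] assoc_mult_mat[OF P1 M mult_carrier_mat[OF P1 MP1(2)]])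
    finally show ?thesis using b1 by simp
  qed
  have e2: "P2 = P1 * M * P2"
  proof -
    have "P2 = (P2 * M) * P2" using b2 by simp
    also have "\<dots> = (transpose_mat M * transpose_mat P2) * P2" using d2 transpose_mult[OF P2 M] by simp
    also have "\<dots> = (((P1 * M) * transpose_mat M) * transpose_mat P2) * P2" using tM2 by simp
    also have "\<dots> = (P1 * M) * (transpose_mat M * transpose_mat P2) * P2" using assoc_mult_mat[OF mult_carrier_mat[OF PM(1) TT(1)] TT(3) P2] assoc_mult_mat[OF PM(1) TT(1) TT(3)] by simp
    also have "\<dots> = (P1 * M) * (P2 * M) * P2" using d2 transpose_mult[OF P2 M] by simp
    also have "\<dots> = P1 * M * (P2 * M * P2)" using assoc_mult_mat[OF PM(1) PM(2) P2] assoc_mult_mat[OF PM(1) P2 MP1(2)] assoc_mult_mat[OF P1 M mult_carrier_mat[OF P2 MP1(2)]] assoc_mult_mat[OF P2 M P2] by simp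
    finally show ?thesis using b2 by simp
  qed
  show ?thesis using e1 e2 by simp
qed

lemma assocD: assumes "dim_col (A::real mat) = dim_row B" "dim_col B = dim_row C" shows "(A * B) * C = A * (B * C)"
proof -
  have "A \<in> carrier_mat (dim_row A) (dim_col A)" "B \<in> carrier_mat (dim_col A) (dim_col B)"
    "C \<in> carrier_mat (dim_col B) (dim_col C)" using assms by (auto intro: carrier_matI)
  then show ?thesis by (rule assoc_mult_mat)
qed

lemma transD: assumes "dim_col (A::real mat) = dim_row B" shows "transpose_mat (A * B) = transpose_mat B * transpose_mat A"
proof -
  have "A \<in> carrier_mat (dim_row A) (dim_col A)" "B \<in> carrier_mat (dim_col A) (dim_col B)"
    using assms by (auto intro: carrier_matI)
  then show ?thesis by (rule transpose_mult)
qed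

lemma pinv_eq:
  fixes M P :: "real mat"
  assumes P: "P \<in> carrier_mat (dim_col M) (dim_row M)"
    and a: "M * P * M = M" and b: "P * M * P = P" and c: "transpose_mat (M * P) = M * P"
    and d: "transpose_mat (P * M) = P * M"
  shows "pinv M = P"
  unfolding pinv_def
proof (rule the_equality)
  show "P \<in> carrier_mat (dim_col M) (dim_row M) \<and> M * P * M = M \<and> P * M * P = P \<and>
      transpose_mat (M * P) = M * P \<and> transpose_mat (P * M) = P * M" using P a b c d by blast
next
  fix P2 assume "P2 \<in> carrier_mat (dim_col M) (dim_row M) \<and> M * P2 * M = M \<and> P2 * M * P2 = P2 \<and>
      transpose_mat (M * P2) = M * P2 \<and> transpose_mat (P2 * M) = P2 * M"
  hence h: "P2 \<in> carrier_mat (dim_col M) (dim_row M)" "M * P2 * M = M" "P2 * M * P2 = P2"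
      "transpose_mat (M * P2) = M * P2" "transpose_mat (P2 * M) = P2 * M" by blast+
  have M: "M \<in> carrier_mat (dim_row M) (dim_col M)" by (rule carrier_matI) simp_all
  show "P2 = P" by (rule mp_unique[OF M h(1) P h(2-5) a b c d])
qed

lemma mp_factor:
  fixes V W Di Gi :: "real mat"
  assumes V: "V \<in> carrier_mat m s" and W: "W \<in> carrier_mat p s"
    and Di: "Di \<in> carrier_mat s s" and Gi: "Gi \<in> carrier_mat s s"
    and D1: "Di * (transpose_mat V * V) = 1\<^sub>m s" and D2: "transpose_mat Di = Di"
    and G1: "Gi * (transpose_mat W * W) = 1\<^sub>m s" and G2: "transpose_mat Gi = Gi"
  shows "pinv (V * transpose_mat W) = W * (Gi * (Di * transpose_mat V))"
    and "V * transpose_mat W * (W * (Gi * (Di * transpose_mat V))) = V * (Di * transpose_mat V)"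
proof -
  have dims: "dim_row V = m" "dim_col V = s" "dim_row W = p" "dim_col W = s" "dim_row Di = s" "dim_col Di = s"
     "dim_row Gi = s" "dim_col Gi = s" using assms by auto
  have D1': "Di * (transpose_mat V * (V * Z)) = Z" if "dim_row Z = s" for Z
  proof -
    have "Di * (transpose_mat V * (V * Z)) = (Di * (transpose_mat V * V)) * Z"
      using that dims by (simp add: assocD)
    then show ?thesis using D1 that by simp
  qed
  have G1': "Gi * (transpose_mat W * (W * Z)) = Z" if "dim_row Z = s" for Z
  proof -
    have "Gi * (transpose_mat W * (W * Z)) = (Gi * (transpose_mat W * W)) * Z"
      using that dims by (simp add: assocD)
    then show ?thesis using G1 that by simp
  qed
  have G1'': "transpose_mat W * (W * (Gi * Z)) = Z" if "dim_row Z = s" for Z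
  proof -
    have "transpose_mat (transpose_mat W * W) = transpose_mat W * W" using dims by (simp add: transD)
    have "transpose_mat (Gi * (transpose_mat W * W)) = 1\<^sub>m s" using G1 by simp
    hence "(transpose_mat W * W) * Gi = 1\<^sub>m s" using dims G2 by (simp add: transD)
    moreover have "transpose_mat W * (W * (Gi * Z)) = ((transpose_mat W * W) * Gi) * Z"
      using that dims by (simp add: assocD)
    ultimately show ?thesis using that by simp
  qed
  let ?M = "V * transpose_mat W" and ?P = "W * (Gi * (Di * transpose_mat V))"
  have MP: "?M * ?P = V * (Di * transpose_mat V)"
    using dims by (simp add: assocD G1'')
  have PM: "?P * ?M = W * (Gi * transpose_mat W)"
    using dims by (simp add: assocD D1')
  show "?M * ?P = V * (Di * transpose_mat V)" by (rule MP)
  show "pinv ?M = ?P"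
  proof (rule pinv_eq)
    show "?P \<in> carrier_mat (dim_col ?M) (dim_row ?M)" by (rule carrier_matI) (simp_all add: dims)
    show "?M * ?P * ?M = ?M" unfolding MP using dims by (simp add: assocD D1')
    show "?P * ?M * ?P = ?P" unfolding PM using dims by (simp add: assocD G1')
    show "transpose_mat (?M * ?P) = ?M * ?P" unfolding MP using dims D2 by (simp add: transD assocD)
    show "transpose_mat (?P * ?M) = ?P * ?M" unfolding PM using dims G2 by (simp add: transD assocD)
  qed
qed

lemma vander:
  fixes e y :: "nat \<Rightarrow> real"
  assumes inj: "inj_on e {..<s}" and sk: "s \<le> k + 1"
    and h: "\<And>j. j \<le> k \<Longrightarrow> (\<Sum>m<s. y m * e m ^ j) = 0" and m0: "m0 < s"
  shows "y m0 = 0"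
proof -
  define L where "L = (\<Prod>m'\<in>{..<s} - {m0}. [:- e m', 1:])"
  have degL: "degree L \<le> k"
  proof -
    have "degree L \<le> sum (degree \<circ> (\<lambda>m'. [:- e m', 1:])) ({..<s} - {m0})"
      unfolding L_def by (rule degree_prod_sum_le) simp
    also have "\<dots> = card ({..<s} - {m0})" by simp
    also have "\<dots> = s - 1" using m0 by simp
    finally show ?thesis using sk by simp
  qed
  have polyL: "poly L t = (\<Sum>j\<le>k. coeff L j * t ^ j)" for t
  proof -
    have "poly L t = (\<Sum>j\<le>degree L. coeff L j * t ^ j)" by (rule poly_altdef)
    also have "\<dots> = (\<Sum>j\<le>k. coeff L j * t ^ j)"
      by (rule sum.mono_neutral_left) (use degL in \<open>auto simp: coeff_eq_0\<close>)
    finally show ?thesis .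
  qed
  have "0 = (\<Sum>j\<le>k. coeff L j * (\<Sum>m<s. y m * e m ^ j))" using h by simp
  also have "\<dots> = (\<Sum>m<s. y m * (\<Sum>j\<le>k. coeff L j * e m ^ j))"
    by (simp add: sum_distrib_left sum_distrib_right sum.swap[of _ "{..k}"] mult_ac)
  also have "\<dots> = (\<Sum>m<s. y m * poly L (e m))" by (simp add: polyL)
  also have "\<dots> = y m0 * poly L (e m0) + (\<Sum>m\<in>{..<s}-{m0}. y m * poly L (e m))"
    using m0 by (simp add: sum.remove)
  also have "(\<Sum>m\<in>{..<s}-{m0}. y m * poly L (e m)) = 0"
  proof (rule sum.neutral, rule ballI)
    fix m assume m: "m \<in> {..<s}-{m0}"
    have "poly L (e m) = (\<Prod>m'\<in>{..<s} - {m0}. e m - e m')" unfolding L_def poly_prod by simp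
    also have "\<dots> = 0" using m by (simp add: prod_zero_iff) (rule bexI[of _ m], auto)
    finally show "y m * poly L (e m) = 0" by simp
  qed
  finally have "y m0 * poly L (e m0) = 0" by simp
  moreover have "poly L (e m0) \<noteq> 0"
  proof -
    have "poly L (e m0) = (\<Prod>m'\<in>{..<s} - {m0}. e m0 - e m')" unfolding L_def poly_prod by simp
    also have "\<dots> \<noteq> 0" using inj m0 by (auto simp: prod_zero_iff inj_on_def)
    finally show ?thesis .
  qed
  ultimately show ?thesis by simp
qed

lemma order_lin_prod:
  fixes lam :: "nat \<Rightarrow> real"
  assumes "finite I"
  shows "order mu (\<Prod>i\<in>I. [:- lam i, 1:]) = card {i\<in>I. lam i = mu}"
  using assms
proof (induction I rule: finite_induct)
  case empty
  then show ?case by (simp add: order_0I)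
next
  case (insert i I)
  have fin: "finite (insert i I)" using insert by simp
  have nz: "(\<Prod>i\<in>insert i I. [:- lam i, 1:]) \<noteq> 0" unfolding prod_zero_iff[OF fin] by simp
  have o1: "order mu [:- lam i, 1:] = (if lam i = mu then 1 else 0)"
  proof (cases "lam i = mu")
    case True
    then show ?thesis using order_power_n_n[of mu 1] by simp
  next
    case False
    then have "poly [:- lam i, 1:] mu \<noteq> 0" by simp
    then have "order mu [:- lam i, 1:] = 0" by (rule order_0I)
    then show ?thesis using False by simp
  qed
  have "order mu (\<Prod>i\<in>insert i I. [:- lam i, 1:]) = order mu ([:- lam i, 1:] * (\<Prod>i\<in>I. [:- lam i, 1:]))"
    using insert by simp
  also have "\<dots> = order mu [:- lam i, 1:] + order mu (\<Prod>i\<in>I. [:- lam i, 1:])"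
    by (rule order_mult) (use nz insert in simp)
  also have "\<dots> = card {j\<in>insert i I. lam j = mu}"
  proof -
    have e: "{j\<in>insert i I. lam j = mu} = (if lam i = mu then insert i {j\<in>I. lam j = mu} else {j\<in>I. lam j = mu})"
      by auto
    have "finite {j\<in>I. lam j = mu}" "i \<notin> {j\<in>I. lam j = mu}" using insert by auto
    then show ?thesis unfolding e using insert o1 by simp
  qed
  finally show ?case .
qed

locale setting =
  fixes A :: "real mat" and n :: nat and q :: "nat \<Rightarrow> real vec" and lam :: "nat \<Rightarrow> real"
    and x :: "nat \<Rightarrow> real vec" and k :: nat
  assumes A_carrier: "A \<in> carrier_mat n n"
    and A_sym: "transpose_mat A = A"
    and q_dim: "\<And>i. i < n \<Longrightarrow> q i \<in> carrier_vec n"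
    and q_orthonormal: "\<And>i j. i < n \<Longrightarrow> j < n \<Longrightarrow> q i \<bullet> q j = (if i = j then 1 else 0)"
    and q_eig: "\<And>i. i < n \<Longrightarrow> A *\<^sub>v q i = lam i \<cdot>\<^sub>v q i"
    and x0_dim: "x 0 \<in> carrier_vec n"
    and x0_generic: "\<And>i. i < n \<Longrightarrow> q i \<bullet> x 0 \<noteq> 0"
    and x_rec: "\<And>t. x (Suc t) = A *\<^sub>v x t"
    and k_ge: "card (lam ` {..<n}) \<le> k"
begin

lemma aux1: fixes u h :: "nat \<Rightarrow> real" shows "(\<Sum>r\<in>R. u r * (g * h r)) = g * (\<Sum>r\<in>R. u r * h r)"
  by (simp add: sum_distrib_left mult.left_commute)

definition vsum :: "nat set \<Rightarrow> (nat \<Rightarrow> real) \<Rightarrow> real vec" where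
  "vsum I f = vec n (\<lambda>r. \<Sum>i\<in>I. f i * q i $ r)"

lemma vsum_carrier[simp]: "vsum I f \<in> carrier_vec n"
  unfolding vsum_def by simp

lemma dot_gen:
  fixes u :: "real vec" and h :: "nat \<Rightarrow> real vec" and g :: "nat \<Rightarrow> real"
  assumes M: "finite M" and h: "\<And>m. m \<in> M \<Longrightarrow> h m \<in> carrier_vec n" and u: "u \<in> carrier_vec n"
  shows "u \<bullet> vec n (\<lambda>r. \<Sum>m\<in>M. g m * h m $ r) = (\<Sum>m\<in>M. g m * (u \<bullet> h m))"
proof -
  have "u \<bullet> vec n (\<lambda>r. \<Sum>m\<in>M. g m * h m $ r) = (\<Sum>r\<in>{0..<n}. u $ r * (\<Sum>m\<in>M. g m * h m $ r))"
    unfolding scalar_prod_def by simp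
  also have "\<dots> = (\<Sum>r\<in>{0..<n}. \<Sum>m\<in>M. u $ r * (g m * h m $ r))"
    by (simp add: sum_distrib_left)
  also have "\<dots> = (\<Sum>m\<in>M. \<Sum>r\<in>{0..<n}. u $ r * (g m * h m $ r))"
    by (rule sum.swap)
  also have "\<dots> = (\<Sum>m\<in>M. g m * (\<Sum>r\<in>{0..<n}. u $ r * h m $ r))"
    by (simp only: aux1)
  also have "\<dots> = (\<Sum>m\<in>M. g m * (u \<bullet> h m))"
  proof (rule sum.cong[OF refl])
    fix m assume "m \<in> M"
    then have "dim_vec (h m) = n" using h by auto
    then show "g m * (\<Sum>r\<in>{0..<n}. u $ r * h m $ r) = g m * (u \<bullet> h m)" by (simp add: scalar_prod_def)
  qed
  finally show ?thesis .
qed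

lemma dot_vsum:
  fixes u :: "real vec"
  assumes I: "I \<subseteq> {..<n}" and u: "u \<in> carrier_vec n"
  shows "u \<bullet> vsum I f = (\<Sum>i\<in>I. f i * (u \<bullet> q i))"
  unfolding vsum_def
  by (rule dot_gen) (use I u q_dim finite_subset[OF I finite_lessThan] in auto)

lemma q_vsum:
  assumes I: "I \<subseteq> {..<n}" and j: "j < n"
  shows "q j \<bullet> vsum I f = (if j \<in> I then f j else 0)"
proof -
  have "q j \<bullet> vsum I f = (\<Sum>i\<in>I. f i * (q j \<bullet> q i))" by (rule dot_vsum[OF I q_dim[OF j]])
  also have "\<dots> = (\<Sum>i\<in>I. if i = j then f i else 0)"
    using I j by (intro sum.cong refl) (auto simp: q_orthonormal)
  also have "\<dots> = (if j \<in> I then f j else 0)"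
    using finite_subset[OF I] by (simp add: sum.delta)
  finally show ?thesis .
qed

definition Q :: "real mat" where "Q = mat n n (\<lambda>(i, r). q i $ r)"

lemma Q_carrier: "Q \<in> carrier_mat n n" unfolding Q_def by simp

lemma row_Q: assumes i: "i < n" shows "row Q i = q i"
proof -
  have "row Q i = vec n (\<lambda>r. q i $ r)" using i unfolding Q_def by simp
  also have "\<dots> = q i" using q_dim[OF i] by (intro eq_vecI) auto
  finally show ?thesis .
qed

lemma QQt: "Q * transpose_mat Q = 1\<^sub>m n"
proof (rule eq_matI)
  fix i j assume ij: "i < dim_row (1\<^sub>m n)" "j < dim_col (1\<^sub>m n)"
  then have i: "i < n" and j: "j < n" by auto
  have "(Q * transpose_mat Q) $$ (i, j) = row Q i \<bullet> col (transpose_mat Q) j"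
    using i j Q_carrier by simp
  also have "\<dots> = q i \<bullet> q j" using i j Q_carrier by (simp add: row_Q)
  finally show "(Q * transpose_mat Q) $$ (i, j) = 1\<^sub>m n $$ (i, j)"
    using i j by (simp add: q_orthonormal)
qed (use Q_carrier in auto)

lemma QtQ: "transpose_mat Q * Q = 1\<^sub>m n"
  by (rule mat_mult_left_right_inverse[OF Q_carrier _ QQt]) (simp add: Q_carrier)

lemma q_complete:
  assumes r: "r < n" and t: "t < n"
  shows "(\<Sum>i<n. q i $ r * q i $ t) = (if r = t then 1 else 0)"
proof -
  have "(transpose_mat Q * Q) $$ (r, t) = (\<Sum>i<n. q i $ r * q i $ t)"
    using r t Q_carrier unfolding Q_def by (simp add: scalar_prod_def lessThan_atLeast0)
  then show ?thesis using QtQ r t by simp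
qed

lemma expand:
  assumes w: "w \<in> carrier_vec n"
  shows "w = vsum {..<n} (\<lambda>i. q i \<bullet> w)"
proof (rule eq_vecI)
  fix r assume "r < dim_vec (vsum {..<n} (\<lambda>i. q i \<bullet> w))"
  hence r: "r < n" unfolding vsum_def by simp
  have "vsum {..<n} (\<lambda>i. q i \<bullet> w) $ r = (\<Sum>i<n. (\<Sum>t<n. q i $ t * w $ t) * q i $ r)"
    using r w q_dim unfolding vsum_def by (simp add: scalar_prod_def lessThan_atLeast0)
  also have "\<dots> = (\<Sum>i<n. \<Sum>t<n. w $ t * (q i $ r * q i $ t))"
    by (simp add: sum_distrib_right sum_distrib_left mult_ac)
  also have "\<dots> = (\<Sum>t<n. \<Sum>i<n. w $ t * (q i $ r * q i $ t))"
    by (rule sum.swap)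
  also have "\<dots> = (\<Sum>t<n. w $ t * (\<Sum>i<n. q i $ r * q i $ t))"
    by (simp add: sum_distrib_left)
  also have "\<dots> = (\<Sum>t<n. if t = r then w $ t else 0)"
    using r by (intro sum.cong refl) (auto simp: q_complete)
  also have "\<dots> = w $ r" using r by simp
  finally show "w $ r = vsum {..<n} (\<lambda>i. q i \<bullet> w) $ r" by simp
qed (use w in \<open>simp add: vsum_def\<close>)

lemma parseval:
  assumes w: "w \<in> carrier_vec n"
  shows "w \<bullet> w = (\<Sum>i<n. (q i \<bullet> w)^2)"
proof -
  have "w \<bullet> w = w \<bullet> vsum {..<n} (\<lambda>i. q i \<bullet> w)" using expand[OF w] by simp
  also have "\<dots> = (\<Sum>i<n. (q i \<bullet> w) * (w \<bullet> q i))" by (rule dot_vsum) (use w in auto)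
  also have "\<dots> = (\<Sum>i<n. (q i \<bullet> w)^2)"
    using w q_dim by (intro sum.cong refl) (simp add: comm_scalar_prod[of _ n] power2_eq_square)
  finally show ?thesis .
qed

lemma q_A:
  assumes u: "u \<in> carrier_vec n" and i: "i < n"
  shows "q i \<bullet> (A *\<^sub>v u) = lam i * (q i \<bullet> u)"
proof -
  have "q i \<bullet> (A *\<^sub>v u) = (transpose_mat A *\<^sub>v q i) \<bullet> u"
    by (rule transpose_vec_mult_scalar[OF A_carrier u q_dim[OF i], symmetric])
  also have "\<dots> = (lam i \<cdot>\<^sub>v q i) \<bullet> u" using A_sym q_eig[OF i] by simp
  also have "\<dots> = lam i * (q i \<bullet> u)" using u q_dim[OF i] by simp
  finally show ?thesis .
qed

lemma x_carrier: "x j \<in> carrier_vec n"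
  by (induction j) (use x0_dim A_carrier x_rec in auto)

definition c :: "nat \<Rightarrow> real" where "c i = q i \<bullet> x 0"

lemma q_x: "i < n \<Longrightarrow> q i \<bullet> x j = lam i ^ j * c i"
  by (induction j) (auto simp: c_def x_rec q_A x_carrier)

end

context setting begin

definition S :: "real set" where "S = lam ` {..<n}"
definition grp :: "real \<Rightarrow> nat set" where "grp mu = {i. i \<in> {..<n} \<and> lam i = mu}"
definition vmu :: "real \<Rightarrow> real vec" where "vmu mu = vsum (grp mu) c"
definition dmu :: "real \<Rightarrow> real" where "dmu mu = (\<Sum>i\<in>grp mu. (c i)^2)"

lemma grp_sub: "grp mu \<subseteq> {..<n}" unfolding grp_def by auto
lemma grp_fin[simp]: "finite (grp mu)" using finite_subset[OF grp_sub] by auto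
lemma S_fin[simp]: "finite S" unfolding S_def by simp
lemma in_grp: "i \<in> grp mu \<longleftrightarrow> i < n \<and> lam i = mu" unfolding grp_def by auto

lemma c_nz: "i < n \<Longrightarrow> c i \<noteq> 0" unfolding c_def using x0_generic by auto

lemma dmu_pos: assumes "mu \<in> S" shows "dmu mu > 0"
proof -
  obtain i where i: "i < n" "lam i = mu" using assms unfolding S_def by auto
  have "i \<in> grp mu" using i by (simp add: in_grp)
  moreover have "\<forall>j\<in>grp mu. (c j)^2 > 0" using c_nz by (auto simp: in_grp)
  ultimately show ?thesis unfolding dmu_def by (intro sum_pos) auto
qed

lemma vmu_carrier[simp]: "vmu mu \<in> carrier_vec n" unfolding vmu_def by simp
lemma dim_vmu[simp]: "dim_vec (vmu mu) = n" unfolding vmu_def vsum_def by simp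

lemma q_vmu: "i < n \<Longrightarrow> q i \<bullet> vmu mu = (if lam i = mu then c i else 0)"
  unfolding vmu_def by (simp add: q_vsum[OF grp_sub] in_grp)

lemma vmu_dot: assumes u: "u \<in> carrier_vec n"
  shows "vmu mu \<bullet> u = (\<Sum>j\<in>grp mu. c j * (q j \<bullet> u))"
proof -
  have "vmu mu \<bullet> u = u \<bullet> vmu mu" using u by (simp add: comm_scalar_prod[of _ n])
  also have "\<dots> = (\<Sum>j\<in>grp mu. c j * (u \<bullet> q j))" unfolding vmu_def by (rule dot_vsum[OF grp_sub u])
  also have "\<dots> = (\<Sum>j\<in>grp mu. c j * (q j \<bullet> u))"
  proof (rule sum.cong[OF refl])
    fix j assume "j \<in> grp mu"
    then have "j < n" by (simp add: in_grp)
    then show "c j * (u \<bullet> q j) = c j * (q j \<bullet> u)" using comm_scalar_prod[OF u q_dim] by simp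
  qed
  finally show ?thesis .
qed

lemma vmu_vmu: "vmu mu \<bullet> vmu nu = (if mu = nu then dmu mu else 0)"
proof -
  have "vmu mu \<bullet> vmu nu = (\<Sum>j\<in>grp mu. c j * (q j \<bullet> vmu nu))" by (rule vmu_dot) simp
  also have "\<dots> = (\<Sum>j\<in>grp mu. c j * (if mu = nu then c j else 0))"
    by (intro sum.cong refl) (auto simp: q_vmu in_grp)
  also have "\<dots> = (if mu = nu then dmu mu else 0)"
    unfolding dmu_def by (simp add: power2_eq_square)
  finally show ?thesis .
qed

lemma x_vec: "x j = vsum {..<n} (\<lambda>i. lam i ^ j * c i)"
proof -
  have "vsum {..<n} (\<lambda>i. q i \<bullet> x j) = vsum {..<n} (\<lambda>i. lam i ^ j * c i)"
    unfolding vsum_def by (rule arg_cong[where f="vec n"], rule ext, rule sum.cong[OF refl]) (simp add: q_x)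
  then show ?thesis using expand[OF x_carrier[of j]] by simp
qed

definition s :: nat where "s = card S"
definition e :: "nat \<Rightarrow> real" where "e = (SOME h. bij_betw h {0..<s} S)"

lemma e_bij: "bij_betw e {..<s} S"
proof -
  have "\<exists>h. bij_betw h {0..<s} S" unfolding s_def by (rule ex_bij_betw_nat_finite) simp
  then have "bij_betw e {0..<s} S" unfolding e_def by (rule someI_ex)
  then show ?thesis by (simp add: lessThan_atLeast0)
qed

lemma e_inj: "inj_on e {..<s}" using e_bij by (simp add: bij_betw_def)
lemma e_S: "m < s \<Longrightarrow> e m \<in> S" using e_bij by (auto simp: bij_betw_def)

lemma sum_e: "(\<Sum>m<s. g (e m)) = (\<Sum>mu\<in>S. g mu)"
  by (rule sum.reindex_bij_betw[OF e_bij])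

lemma s_le: "s \<le> k + 1" using k_ge unfolding s_def S_def by simp

definition V :: "real mat" where "V = mat n s (\<lambda>(r, m). vmu (e m) $ r)"
definition W :: "real mat" where "W = mat (k+1) s (\<lambda>(j, m). e m ^ j)"
definition Di :: "real mat" where "Di = mat s s (\<lambda>(a, b). if a = b then 1 / dmu (e a) else 0)"

lemma V_carrier: "V \<in> carrier_mat n s" unfolding V_def by simp
lemma W_carrier: "W \<in> carrier_mat (k+1) s" unfolding W_def by simp
lemma Di_carrier: "Di \<in> carrier_mat s s" unfolding Di_def by simp

lemma col_V: assumes m: "m < s" shows "col V m = vmu (e m)"
proof -
  have "col V m = vec n (\<lambda>r. vmu (e m) $ r)" using m unfolding V_def by simp
  also have "\<dots> = vmu (e m)" by (intro eq_vecI) auto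
  finally show ?thesis .
qed

lemma X_fact: "mat n (k + 1) (\<lambda>(i, j). x j $ i) = V * transpose_mat W"
proof (rule eq_matI)
  fix r j assume rj: "r < dim_row (V * transpose_mat W)" "j < dim_col (V * transpose_mat W)"
  then have r: "r < n" and j: "j < k + 1" using V_carrier W_carrier by auto
  have "(V * transpose_mat W) $$ (r, j) = (\<Sum>m<s. vmu (e m) $ r * e m ^ j)"
    using r j V_carrier W_carrier unfolding V_def W_def by (simp add: scalar_prod_def lessThan_atLeast0)
  also have "\<dots> = (\<Sum>mu\<in>S. vmu mu $ r * mu ^ j)" by (rule sum_e)
  also have "\<dots> = (\<Sum>mu\<in>S. \<Sum>i\<in>grp mu. lam i ^ j * c i * q i $ r)"
  proof (rule sum.cong[OF refl])
    fix mu assume "mu \<in> S"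
    have "vmu mu $ r * mu ^ j = (\<Sum>i\<in>grp mu. c i * q i $ r) * mu ^ j"
      using r unfolding vmu_def vsum_def by simp
    also have "\<dots> = (\<Sum>i\<in>grp mu. lam i ^ j * c i * q i $ r)"
      unfolding sum_distrib_right by (rule sum.cong[OF refl]) (simp add: in_grp)
    finally show "vmu mu $ r * mu ^ j = (\<Sum>i\<in>grp mu. lam i ^ j * c i * q i $ r)" .
  qed
  also have "\<dots> = (\<Sum>i\<in>{..<n}. lam i ^ j * c i * q i $ r)"
    unfolding grp_def by (rule sum.group) (auto simp: S_def)
  also have "\<dots> = x j $ r" using r by (simp add: x_vec vsum_def)
  finally show "mat n (k + 1) (\<lambda>(i, j). x j $ i) $$ (r, j) = (V * transpose_mat W) $$ (r, j)"
    using r j by simp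
qed (use V_carrier W_carrier in auto)

lemma VtV: "transpose_mat V * V = mat s s (\<lambda>(a, b). if a = b then dmu (e a) else 0)"
proof (rule eq_matI)
  fix a b assume ab: "a < dim_row (mat s s (\<lambda>(a, b). if a = b then dmu (e a) else 0))"
    "b < dim_col (mat s s (\<lambda>(a, b). if a = b then dmu (e a) else 0))"
  then have a: "a < s" and b: "b < s" by auto
  have "(transpose_mat V * V) $$ (a, b) = col V a \<bullet> col V b" using a b V_carrier by simp
  also have "\<dots> = vmu (e a) \<bullet> vmu (e b)" using a b by (simp add: col_V)
  also have "\<dots> = (if a = b then dmu (e a) else 0)"
    using a b e_inj by (auto simp: vmu_vmu inj_on_def)
  finally show "(transpose_mat V * V) $$ (a, b) = mat s s (\<lambda>(a, b). if a = b then dmu (e a) else 0) $$ (a, b)"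
    using a b by simp
qed (use V_carrier in auto)

lemma Di_inv: "Di * (transpose_mat V * V) = 1\<^sub>m s"
proof (rule eq_matI)
  fix a b assume ab: "a < dim_row (1\<^sub>m s)" "b < dim_col (1\<^sub>m s)"
  then have a: "a < s" and b: "b < s" by auto
  have "(Di * (transpose_mat V * V)) $$ (a, b) =
      (\<Sum>t\<in>{0..<s}. (if a = t then 1 / dmu (e a) else 0) * (if t = b then dmu (e t) else 0))"
    using a b unfolding VtV Di_def by (simp add: scalar_prod_def)
  also have "\<dots> = (\<Sum>t\<in>{0..<s}. if t = a then (1 / dmu (e a)) * (if a = b then dmu (e a) else 0) else 0)"
    by (rule sum.cong[OF refl]) auto
  also have "\<dots> = (1 / dmu (e a)) * (if a = b then dmu (e a) else 0)" using a by simp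
  also have "\<dots> = (if a = b then 1 else 0)" using dmu_pos[OF e_S[OF a]] by (cases "a = b") auto
  finally show "(Di * (transpose_mat V * V)) $$ (a, b) = 1\<^sub>m s $$ (a, b)" using a b by simp
qed (use V_carrier Di_carrier in auto)

lemma Di_sym: "transpose_mat Di = Di"
  by (rule eq_matI) (auto simp: Di_def)

end

context setting begin

definition G :: "real mat" where "G = transpose_mat W * W"

lemma G_carrier: "G \<in> carrier_mat s s" unfolding G_def using W_carrier by simp

lemma G_kernel:
  assumes y: "y \<in> carrier_vec s" and Gy: "G *\<^sub>v y = 0\<^sub>v s"
  shows "y = 0\<^sub>v s"
proof -
  have Wt: "transpose_mat W \<in> carrier_mat s (k+1)" using W_carrier by simp
  have Wy: "W *\<^sub>v y \<in> carrier_vec (k+1)" using W_carrier y by simp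
  have "G *\<^sub>v y = transpose_mat W *\<^sub>v (W *\<^sub>v y)"
    unfolding G_def by (rule assoc_mult_mat_vec[OF Wt W_carrier y])
  then have "(transpose_mat W *\<^sub>v (W *\<^sub>v y)) \<bullet> y = 0\<^sub>v s \<bullet> y" using Gy by simp
  also have "\<dots> = 0" using y by simp
  finally have "0 = (transpose_mat W *\<^sub>v (W *\<^sub>v y)) \<bullet> y" by simp
  also have "\<dots> = (W *\<^sub>v y) \<bullet> (W *\<^sub>v y)" by (rule transpose_vec_mult_scalar[OF W_carrier y Wy])
  also have "\<dots> = (\<Sum>j\<in>{0..<k+1}. ((W *\<^sub>v y) $ j)^2)"
  proof -
    have dW: "dim_vec (W *\<^sub>v y) = k + 1" using W_carrier by simp
    show ?thesis unfolding scalar_prod_def power2_eq_square dW by (rule refl)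
  qed
  finally have "(\<Sum>j\<in>{0..<k+1}. ((W *\<^sub>v y) $ j)^2) = 0" by simp
  then have z: "\<forall>j\<in>{0..<k+1}. ((W *\<^sub>v y) $ j)^2 = 0"
    by (subst (asm) sum_nonneg_eq_0_iff) auto
  have h: "(\<Sum>m<s. y $ m * e m ^ j) = 0" if j: "j \<le> k" for j
  proof -
    have "(W *\<^sub>v y) $ j = (\<Sum>m\<in>{0..<s}. e m ^ j * y $ m)"
      using j y W_carrier unfolding W_def by (simp add: scalar_prod_def)
    moreover have "(W *\<^sub>v y) $ j = 0" using z j by auto
    ultimately show ?thesis by (simp add: lessThan_atLeast0 mult.commute)
  qed
  show ?thesis
  proof (rule eq_vecI)
    fix m assume "m < dim_vec (0\<^sub>v s)"
    then have m: "m < s" by simp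
    have "y $ m = 0" by (rule vander[OF e_inj s_le h m])
    then show "y $ m = 0\<^sub>v s $ m" using m by simp
  qed (use y in simp)
qed

lemma G_det: "det G \<noteq> 0"
  using det_0_iff_vec_prod_zero_field[OF G_carrier] G_kernel by auto

definition Gi :: "real mat" where
  "Gi = (SOME B. B \<in> carrier_mat s s \<and> B * G = 1\<^sub>m s \<and> G * B = 1\<^sub>m s)"

lemma Gi_props: "Gi \<in> carrier_mat s s \<and> Gi * G = 1\<^sub>m s \<and> G * Gi = 1\<^sub>m s"
proof -
  have "G \<in> Units (ring_mat TYPE(real) s ())" by (rule det_non_zero_imp_unit[OF G_carrier G_det])
  then have "\<exists>B. B \<in> carrier_mat s s \<and> B * G = 1\<^sub>m s \<and> G * B = 1\<^sub>m s"
    unfolding Units_def ring_mat_def by auto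
  then show ?thesis unfolding Gi_def by (rule someI_ex)
qed

lemma Gi_carrier: "Gi \<in> carrier_mat s s" using Gi_props by simp

lemma G_sym: "transpose_mat G = G"
  unfolding G_def using transpose_mult[of "transpose_mat W" s "k+1" W s] W_carrier by simp

lemma Gi_sym: "transpose_mat Gi = Gi"
proof -
  have GiG: "G * Gi = 1\<^sub>m s" using Gi_props by simp
  have "transpose_mat Gi * G = transpose_mat (G * Gi)"
    using transpose_mult[OF G_carrier Gi_carrier] G_sym by simp
  then have tG: "transpose_mat Gi * G = 1\<^sub>m s" using GiG by simp
  have tc: "transpose_mat Gi \<in> carrier_mat s s" using Gi_carrier by simp
  have "transpose_mat Gi = transpose_mat Gi * (G * Gi)" using GiG tc by simp
  also have "\<dots> = (transpose_mat Gi * G) * Gi" using assoc_mult_mat[OF tc G_carrier Gi_carrier] by simp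
  also have "\<dots> = Gi" using tG Gi_carrier by simp
  finally show ?thesis .
qed

lemma Gi_inv: "Gi * (transpose_mat W * W) = 1\<^sub>m s" using Gi_props unfolding G_def by simp

definition X0 :: "real mat" where "X0 = mat n (k + 1) (\<lambda>(i, j). x j $ i)"
definition Y0 :: "real mat" where "Y0 = mat n (k + 1) (\<lambda>(i, j). x (j + 1) $ i)"
definition P0 :: "real mat" where "P0 = W * (Gi * (Di * transpose_mat V))"
definition Prj :: "real mat" where "Prj = V * (Di * transpose_mat V)"

lemma X0_carrier: "X0 \<in> carrier_mat n (k+1)" unfolding X0_def by simp
lemma P0_carrier: "P0 \<in> carrier_mat (k+1) n" unfolding P0_def
  using W_carrier Gi_carrier Di_carrier V_carrier by simp
lemma Prj_carrier: "Prj \<in> carrier_mat n n" unfolding Prj_def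
  using Di_carrier V_carrier by simp

lemma pinv_X0: "pinv X0 = P0" and X0P0: "X0 * P0 = Prj"
  using mp_factor[OF V_carrier W_carrier Di_carrier Gi_carrier Di_inv Di_sym Gi_inv Gi_sym]
  unfolding X0_def X_fact P0_def Prj_def by auto

lemma Y0_eq: "Y0 = A * X0"
proof (rule eq_matI)
  fix i j assume ij: "i < dim_row (A * X0)" "j < dim_col (A * X0)"
  then have i: "i < n" and j: "j < k + 1" using A_carrier X0_carrier by auto
  have cX: "col X0 j = x j"
  proof -
    have "col X0 j = vec n (\<lambda>r. x j $ r)" using j unfolding X0_def by simp
    also have "\<dots> = x j" using x_carrier[of j] by (intro eq_vecI) auto
    finally show ?thesis .
  qed
  have "(A * X0) $$ (i, j) = row A i \<bullet> x j" using i j A_carrier X0_carrier cX by simp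
  also have "\<dots> = x (j + 1) $ i" using i A_carrier x_rec[of j] by simp
  finally show "Y0 $$ (i, j) = (A * X0) $$ (i, j)" using i j unfolding Y0_def by simp
qed (use A_carrier X0_carrier in \<open>auto simp: Y0_def\<close>)

lemma Ahat_eq: "Y0 * pinv X0 = A * Prj"
  unfolding Y0_eq pinv_X0 X0P0[symmetric]
  by (rule assoc_mult_mat[OF A_carrier X0_carrier P0_carrier])

end

context setting begin

lemma Prj_apply:
  assumes v: "v \<in> carrier_vec n" and i: "i < n"
  shows "q i \<bullet> (Prj *\<^sub>v v) = c i * (vmu (lam i) \<bullet> v) / dmu (lam i)"
proof -
  have Vt: "transpose_mat V \<in> carrier_mat s n" using V_carrier by simp
  define z where "z = Di *\<^sub>v (transpose_mat V *\<^sub>v v)"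
  have zc: "z \<in> carrier_vec s" unfolding z_def by (rule mult_mat_vec_carrier[OF Di_carrier mult_mat_vec_carrier[OF Vt v]])
  have Pv: "Prj *\<^sub>v v = V *\<^sub>v z"
    unfolding Prj_def z_def
    using assoc_mult_mat_vec[OF V_carrier mult_carrier_mat[OF Di_carrier Vt] v]
      assoc_mult_mat_vec[OF Di_carrier Vt v] by simp
  have Vtv: "(transpose_mat V *\<^sub>v v) $ m = vmu (e m) \<bullet> v" if m: "m < s" for m
    using m V_carrier by (simp add: col_V)
  have zm: "z $ m = (vmu (e m) \<bullet> v) / dmu (e m)" if m: "m < s" for m
  proof -
    have "z $ m = (\<Sum>t\<in>{0..<s}. (if m = t then 1 / dmu (e m) else 0) * (transpose_mat V *\<^sub>v v) $ t)"
      unfolding z_def using m Di_carrier Vt unfolding Di_def by (simp add: scalar_prod_def)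
    also have "\<dots> = (\<Sum>t\<in>{0..<s}. if t = m then 1 / dmu (e m) * (transpose_mat V *\<^sub>v v) $ m else 0)"
      by (rule sum.cong[OF refl]) auto
    also have "\<dots> = 1 / dmu (e m) * (transpose_mat V *\<^sub>v v) $ m" using m by simp
    finally show ?thesis using Vtv[OF m] by simp
  qed
  have Vz: "V *\<^sub>v z = vec n (\<lambda>r. \<Sum>m\<in>{..<s}. z $ m * vmu (e m) $ r)"
  proof (rule eq_vecI)
    fix r assume "r < dim_vec (vec n (\<lambda>r. \<Sum>m\<in>{..<s}. z $ m * vmu (e m) $ r))"
    then have r: "r < n" by simp
    show "(V *\<^sub>v z) $ r = vec n (\<lambda>r. \<Sum>m\<in>{..<s}. z $ m * vmu (e m) $ r) $ r"
      using r zc V_carrier unfolding V_def by (simp add: scalar_prod_def lessThan_atLeast0 mult.commute)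
  qed (use V_carrier in simp)
  have "q i \<bullet> (Prj *\<^sub>v v) = (\<Sum>m\<in>{..<s}. z $ m * (q i \<bullet> vmu (e m)))"
    unfolding Pv Vz by (rule dot_gen) (use q_dim[OF i] in auto)
  also have "\<dots> = (\<Sum>m<s. (\<lambda>mu. (vmu mu \<bullet> v) / dmu mu * (if lam i = mu then c i else 0)) (e m))"
    by (rule sum.cong[OF refl]) (simp add: zm q_vmu i)
  also have "\<dots> = (\<Sum>mu\<in>S. (vmu mu \<bullet> v) / dmu mu * (if lam i = mu then c i else 0))"
    by (rule sum_e)
  also have "\<dots> = (\<Sum>mu\<in>S. if mu = lam i then (vmu mu \<bullet> v) / dmu mu * c i else 0)"
    by (rule sum.cong[OF refl]) auto
  also have "\<dots> = (vmu (lam i) \<bullet> v) / dmu (lam i) * c i"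
    using i by (simp add: S_def)
  finally show ?thesis by simp
qed

lemma key:
  assumes v: "v \<in> carrier_vec n" and i: "i < n"
  shows "q i \<bullet> ((A - A * Prj) *\<^sub>v v) =
    lam i * (q i \<bullet> v - c i * (\<Sum>j\<in>grp (lam i). c j * (q j \<bullet> v)) / dmu (lam i))"
proof -
  have AP: "A * Prj \<in> carrier_mat n n" using A_carrier Prj_carrier by simp
  have Pv: "Prj *\<^sub>v v \<in> carrier_vec n" using Prj_carrier v by simp
  have "(A - A * Prj) *\<^sub>v v = A *\<^sub>v v - (A * Prj) *\<^sub>v v"
    by (rule minus_mult_distrib_mat_vec[OF A_carrier AP v])
  also have "\<dots> = A *\<^sub>v v - A *\<^sub>v (Prj *\<^sub>v v)" using assoc_mult_mat_vec[OF A_carrier Prj_carrier v] by simp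
  also have "\<dots> = A *\<^sub>v (v - Prj *\<^sub>v v)" by (rule mult_minus_distrib_mat_vec[OF A_carrier v Pv, symmetric])
  finally have eq: "(A - A * Prj) *\<^sub>v v = A *\<^sub>v (v - Prj *\<^sub>v v)" .
  have "q i \<bullet> ((A - A * Prj) *\<^sub>v v) = lam i * (q i \<bullet> (v - Prj *\<^sub>v v))"
    unfolding eq by (rule q_A) (use v Pv in simp, rule i)
  also have "q i \<bullet> (v - Prj *\<^sub>v v) = q i \<bullet> v - q i \<bullet> (Prj *\<^sub>v v)"
    by (rule scalar_prod_minus_distrib[OF q_dim[OF i] v Pv])
  finally show ?thesis by (simp add: Prj_apply[OF v i] vmu_dot[OF v])
qed

definition Lam :: "real mat" where "Lam = mat n n (\<lambda>(i, j). if i = j then lam i else 0)"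

lemma Lam_carrier: "Lam \<in> carrier_mat n n" unfolding Lam_def by simp

lemma col_Qt: "i < n \<Longrightarrow> col (transpose_mat Q) i = q i"
  using row_Q Q_carrier by simp

lemma AQt: "A * transpose_mat Q = transpose_mat Q * Lam"
proof (rule eq_matI)
  fix r i assume ri: "r < dim_row (transpose_mat Q * Lam)" "i < dim_col (transpose_mat Q * Lam)"
  then have r: "r < n" and i: "i < n" using Q_carrier Lam_carrier by auto
  have "(A * transpose_mat Q) $$ (r, i) = row A r \<bullet> q i" using r i A_carrier Q_carrier by (simp add: col_Qt row_Q)
  also have "\<dots> = (A *\<^sub>v q i) $ r" using r A_carrier by simp
  also have "\<dots> = lam i * q i $ r" using q_eig[OF i] r q_dim[OF i] by simp
  finally have l: "(A * transpose_mat Q) $$ (r, i) = lam i * q i $ r" .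
  have "(transpose_mat Q * Lam) $$ (r, i) = (\<Sum>t\<in>{0..<n}. q t $ r * (if t = i then lam t else 0))"
    using r i Q_carrier Lam_carrier unfolding Lam_def Q_def by (simp add: scalar_prod_def)
  also have "\<dots> = (\<Sum>t\<in>{0..<n}. if t = i then q i $ r * lam i else 0)"
    by (rule sum.cong[OF refl]) auto
  also have "\<dots> = lam i * q i $ r" using i by simp
  finally show "(A * transpose_mat Q) $$ (r, i) = (transpose_mat Q * Lam) $$ (r, i)" using l by simp
qed (use A_carrier Q_carrier Lam_carrier in auto)

lemma A_sim: "similar_mat A Lam"
proof (rule similar_matI[of A Lam "transpose_mat Q" Q n])
  show "{A, Lam, transpose_mat Q, Q} \<subseteq> carrier_mat n n" using A_carrier Lam_carrier Q_carrier by auto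
  show "transpose_mat Q * Q = 1\<^sub>m n" by (rule QtQ)
  show "Q * transpose_mat Q = 1\<^sub>m n" by (rule QQt)
  have Qt: "transpose_mat Q \<in> carrier_mat n n" using Q_carrier by simp
  have "A = A * (transpose_mat Q * Q)" using QtQ A_carrier by simp
  also have "\<dots> = (A * transpose_mat Q) * Q" using assoc_mult_mat[OF A_carrier Qt Q_carrier] by simp
  also have "\<dots> = transpose_mat Q * Lam * Q" by (simp add: AQt)
  finally show "A = transpose_mat Q * Lam * Q" .
qed

lemma char_poly_A: "char_poly A = (\<Prod>i\<in>{..<n}. [:- lam i, 1:])"
proof -
  have ut: "upper_triangular Lam" unfolding upper_triangular_def Lam_def by auto
  have "char_poly A = char_poly Lam" by (rule char_poly_similar[OF A_sim])
  also have "\<dots> = (\<Prod>a\<leftarrow>diag_mat Lam. [:- a, 1:])" by (rule char_poly_upper_triangular[OF Lam_carrier ut])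
  also have "diag_mat Lam = map lam [0..<n]" unfolding diag_mat_def Lam_def by simp
  also have "(\<Prod>a\<leftarrow>map lam [0..<n]. [:- a, 1:]) = (\<Prod>i\<leftarrow>[0..<n]. [:- lam i, 1:])"
    by (simp add: comp_def)
  also have "\<dots> = (\<Prod>i\<in>set [0..<n]. [:- lam i, 1:])" by (rule prod.distinct_set_conv_list[symmetric]) simp
  also have "\<dots> = (\<Prod>i\<in>{..<n}. [:- lam i, 1:])" by (simp add: lessThan_atLeast0)
  finally show ?thesis .
qed

lemma alg_mult_grp: "alg_mult A mu = card (grp mu)"
  unfolding alg_mult_def char_poly_A order_lin_prod[OF finite_lessThan] grp_def by simp

end

context setting begin

definition bb :: "(nat \<Rightarrow> real) \<Rightarrow> nat \<Rightarrow> real" where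
  "bb a i = a i - c i * (\<Sum>j\<in>grp (lam i). c j * a j) / dmu (lam i)"

lemma sum_grp: "(\<Sum>i<n. f i) = (\<Sum>mu\<in>S. \<Sum>i\<in>grp mu. f i)"
  unfolding grp_def by (rule sum.group[symmetric]) (auto simp: S_def)

lemma grp_bound:
  assumes mu: "mu \<in> S"
  shows "(\<Sum>i\<in>grp mu. (bb a i)^2) \<le> (\<Sum>i\<in>grp mu. (a i)^2)"
proof -
  define Cs where "Cs = (\<Sum>j\<in>grp mu. c j * a j)"
  define Ds where "Ds = dmu mu"
  have Ds: "Ds > 0" unfolding Ds_def by (rule dmu_pos[OF mu])
  define t where "t = Cs / Ds"
  have "(\<Sum>i\<in>grp mu. (bb a i)^2) = (\<Sum>i\<in>grp mu. (a i - c i * t)^2)"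
    by (rule sum.cong[OF refl]) (simp add: bb_def in_grp Cs_def Ds_def t_def)
  also have "\<dots> = (\<Sum>i\<in>grp mu. (a i)^2 - 2 * t * (c i * a i) + t^2 * (c i)^2)"
    by (rule sum.cong[OF refl]) (simp add: power2_eq_square algebra_simps)
  also have "\<dots> = (\<Sum>i\<in>grp mu. (a i)^2) - 2 * t * Cs + t^2 * Ds"
    unfolding Cs_def Ds_def dmu_def
    by (simp add: sum.distrib sum_subtractf sum_distrib_left)
  finally have eq1: "(\<Sum>i\<in>grp mu. (bb a i)^2) = (\<Sum>i\<in>grp mu. (a i)^2) - 2 * t * Cs + t^2 * Ds" .
  have eq2: "2 * t * Cs - t^2 * Ds = (Cs^2) / Ds" unfolding t_def using Ds
    by (simp add: power2_eq_square field_simps)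
  have "(\<Sum>i\<in>grp mu. (bb a i)^2) = (\<Sum>i\<in>grp mu. (a i)^2) - (Cs^2) / Ds" using eq1 eq2 by simp
  moreover have "Cs^2 / Ds \<ge> 0" using Ds by simp
  ultimately show ?thesis by simp
qed

lemma bb_bound: "(\<Sum>i<n. (bb a i)^2) \<le> (\<Sum>i<n. (a i)^2)"
  unfolding sum_grp by (rule sum_mono) (rule grp_bound)

lemma bb_single:
  assumes i: "i < n" and cd: "\<not> card (grp (lam i)) > 1"
  shows "bb a i = 0"
proof -
  have ii: "i \<in> grp (lam i)" using i by (simp add: in_grp)
  have "grp (lam i) = {i}"
  proof -
    have "grp (lam i) \<noteq> {}" using ii by auto
    then have "card (grp (lam i)) > 0" by (simp add: card_gt_0_iff)
    then have "card (grp (lam i)) = 1" using cd by linarith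
    then obtain z where "grp (lam i) = {z}" by (auto simp: card_1_singleton_iff)
    then show ?thesis using ii by auto
  qed
  then show ?thesis using c_nz[OF i] unfolding bb_def dmu_def by (simp add: power2_eq_square)
qed

definition Lst :: real where "Lst = Max {\<bar>lam i\<bar> | i. i < n \<and> alg_mult A (lam i) > 1}"

lemma T_fin: "finite {\<bar>lam i\<bar> | i. i < n \<and> alg_mult A (lam i) > 1}"
  by (rule finite_image_set) simp

lemma norm_w:
  assumes v: "v \<in> carrier_vec n"
  shows "((A - A * Prj) *\<^sub>v v) \<bullet> ((A - A * Prj) *\<^sub>v v) = (\<Sum>i<n. (lam i * bb (\<lambda>j. q j \<bullet> v) i)^2)"
proof -
  have AP: "A - A * Prj \<in> carrier_mat n n" by (rule minus_carrier_mat[OF mult_carrier_mat[OF A_carrier Prj_carrier]])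
  have w: "(A - A * Prj) *\<^sub>v v \<in> carrier_vec n" using AP v by simp
  show ?thesis unfolding parseval[OF w]
    by (rule sum.cong[OF refl]) (simp add: key[OF v] bb_def)
qed

lemma upper:
  assumes rep: "\<exists>i<n. alg_mult A (lam i) > 1" and v: "v \<in> carrier_vec n" and v1: "vnorm v = 1"
  shows "vnorm ((A - A * Prj) *\<^sub>v v) \<le> Lst"
proof -
  define a where "a = (\<lambda>j. q j \<bullet> v)"
  have Lst0: "Lst \<ge> 0"
  proof -
    obtain i where "i < n" "alg_mult A (lam i) > 1" using rep by auto
    then have "\<bar>lam i\<bar> \<le> Lst" unfolding Lst_def by (intro Max_ge[OF T_fin]) auto
    then show ?thesis by simp
  qed
  have vv: "v \<bullet> v = 1" using v1 unfolding vnorm_def by simp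
  have each: "(lam i * bb a i)^2 \<le> Lst^2 * (bb a i)^2" if i: "i < n" for i
  proof (cases "card (grp (lam i)) > 1")
    case True
    then have "\<bar>lam i\<bar> \<le> Lst" unfolding Lst_def using i
      by (intro Max_ge[OF T_fin]) (auto simp: alg_mult_grp)
    then have "\<bar>lam i\<bar>^2 \<le> Lst^2" by (intro power_mono) auto
    then have "(lam i)^2 \<le> Lst^2" by simp
    then show ?thesis by (simp add: power_mult_distrib mult_right_mono)
  next
    case False
    then show ?thesis using bb_single[OF i] by simp
  qed
  have "((A - A * Prj) *\<^sub>v v) \<bullet> ((A - A * Prj) *\<^sub>v v) = (\<Sum>i<n. (lam i * bb a i)^2)"
    unfolding a_def by (rule norm_w[OF v])
  also have "\<dots> \<le> (\<Sum>i<n. Lst^2 * (bb a i)^2)" by (rule sum_mono) (rule each, simp)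
  also have "\<dots> = Lst^2 * (\<Sum>i<n. (bb a i)^2)" by (simp add: sum_distrib_left)
  also have "\<dots> \<le> Lst^2 * (\<Sum>i<n. (a i)^2)" by (rule mult_left_mono[OF bb_bound]) simp
  also have "(\<Sum>i<n. (a i)^2) = 1" using parseval[OF v] vv unfolding a_def by simp
  finally have "((A - A * Prj) *\<^sub>v v) \<bullet> ((A - A * Prj) *\<^sub>v v) \<le> Lst^2" by simp
  then have "vnorm ((A - A * Prj) *\<^sub>v v) \<le> sqrt (Lst^2)" unfolding vnorm_def by (rule real_sqrt_le_mono)
  also have "\<dots> = Lst" using Lst0 by simp
  finally show ?thesis .
qed

end

context setting begin

lemma attain:
  assumes rep: "\<exists>i<n. alg_mult A (lam i) > 1"
  shows "\<exists>v. v \<in> carrier_vec n \<and> vnorm v = 1 \<and> vnorm ((A - A * Prj) *\<^sub>v v) = Lst"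
proof -
  have "Lst \<in> {\<bar>lam i\<bar> | i. i < n \<and> alg_mult A (lam i) > 1}"
    unfolding Lst_def by (rule Max_in[OF T_fin]) (use rep in auto)
  then obtain i0 where i0: "i0 < n" "alg_mult A (lam i0) > 1" "Lst = \<bar>lam i0\<bar>" by auto
  then have cg: "card (grp (lam i0)) > 1" by (simp add: alg_mult_grp)
  have "\<not> grp (lam i0) \<subseteq> {i0}"
  proof
    assume "grp (lam i0) \<subseteq> {i0}"
    then have "card (grp (lam i0)) \<le> card {i0}" by (rule card_mono[rotated]) simp
    with cg show False by simp
  qed
  then obtain j0 where j0g: "j0 \<in> grp (lam i0)" and ji: "j0 \<noteq> i0" by auto
  then have j0: "j0 < n" and lj: "lam j0 = lam i0" by (auto simp: in_grp)
  define N where "N = sqrt ((c i0)^2 + (c j0)^2)"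
  have pos: "(c i0)^2 + (c j0)^2 > 0" using c_nz[OF i0(1)] by (simp add: add_pos_nonneg)
  then have N0: "N > 0" unfolding N_def by simp
  have N2: "N^2 = (c i0)^2 + (c j0)^2" unfolding N_def using pos by simp
  define f where "f = (\<lambda>i. if i = i0 then c j0 / N else if i = j0 then - c i0 / N else 0)"
  define v where "v = vsum {i0, j0} f"
  have sub: "{i0, j0} \<subseteq> {..<n}" using i0 j0 by auto
  have vc: "v \<in> carrier_vec n" unfolding v_def by simp
  have qv: "q i \<bullet> v = f i" if i: "i < n" for i
    unfolding v_def using q_vsum[OF sub i] by (auto simp: f_def)
  have sumf: "(\<Sum>i<n. g i) = g i0 + g j0" if g: "\<And>i. i \<notin> {i0, j0} \<Longrightarrow> g i = 0" for g :: "nat \<Rightarrow> real"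
  proof -
    have "(\<Sum>i<n. g i) = (\<Sum>i\<in>{i0, j0}. g i)"
      by (rule sum.mono_neutral_right) (use sub g in auto)
    also have "\<dots> = g i0 + g j0" using ji by simp
    finally show ?thesis .
  qed
  have fi0: "f i0 = c j0 / N" and fj0: "f j0 = - c i0 / N" unfolding f_def using ji by auto
  have ff: "(f i0)^2 + (f j0)^2 = 1"
  proof -
    have "(f i0)^2 + (f j0)^2 = ((c j0)^2 + (c i0)^2) / N^2" unfolding fi0 fj0 by (simp add: power_divide add_divide_distrib)
    also have "\<dots> = 1" using N2 pos c_nz[OF i0(1)] by (simp add: add.commute)
    finally show ?thesis .
  qed
  have fz: "\<And>i. i \<notin> {i0, j0} \<Longrightarrow> f i = 0" unfolding f_def by auto
  have vv: "v \<bullet> v = 1"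
  proof -
    have "v \<bullet> v = (\<Sum>i<n. (q i \<bullet> v)^2)" by (rule parseval[OF vc])
    also have "\<dots> = (\<Sum>i<n. (f i)^2)" by (rule sum.cong[OF refl]) (simp add: qv)
    also have "\<dots> = (f i0)^2 + (f j0)^2" by (rule sumf) (simp add: fz)
    finally show ?thesis using ff by simp
  qed
  have cf: "(\<Sum>j\<in>grp mu. c j * f j) = 0" for mu
  proof -
    have "(\<Sum>j\<in>grp mu. c j * f j) =
        (\<Sum>j\<in>grp mu. (if j = i0 then c i0 * c j0 / N else 0) + (if j = j0 then - (c j0 * c i0 / N) else 0))"
      by (rule sum.cong[OF refl]) (use ji in \<open>auto simp: f_def\<close>)
    also have "\<dots> = (if i0 \<in> grp mu then c i0 * c j0 / N else 0) + (if j0 \<in> grp mu then - (c j0 * c i0 / N) else 0)"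
      by (simp add: sum.distrib sum.delta)
    also have "\<dots> = 0" using i0(1) j0 lj by (auto simp: in_grp mult.commute)
    finally show ?thesis .
  qed
  have bbf: "bb (\<lambda>j. q j \<bullet> v) i = f i" if i: "i < n" for i
  proof -
    have "(\<Sum>j\<in>grp (lam i). c j * (q j \<bullet> v)) = (\<Sum>j\<in>grp (lam i). c j * f j)"
      by (rule sum.cong[OF refl]) (simp add: in_grp qv)
    then show ?thesis unfolding bb_def using cf qv[OF i] by simp
  qed
  have "((A - A * Prj) *\<^sub>v v) \<bullet> ((A - A * Prj) *\<^sub>v v) = (\<Sum>i<n. (lam i * f i)^2)"
    unfolding norm_w[OF vc] by (rule sum.cong[OF refl]) (simp add: bbf)
  also have "\<dots> = (lam i0 * f i0)^2 + (lam j0 * f j0)^2" by (rule sumf) (simp add: fz)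
  also have "\<dots> = (lam i0)^2 * ((f i0)^2 + (f j0)^2)" using lj by (simp add: power_mult_distrib algebra_simps)
  also have "\<dots> = (lam i0)^2" using ff by simp
  finally have "vnorm ((A - A * Prj) *\<^sub>v v) = \<bar>lam i0\<bar>" unfolding vnorm_def by simp
  then show ?thesis using vc vv i0(3) unfolding vnorm_def by auto
qed

lemma main_Prj:
  assumes rep: "\<exists>i<n. alg_mult A (lam i) > 1"
  shows "spec_norm (A - A * Prj) = Lst"
proof -
  have dc: "dim_col (A - A * Prj) = n" using Prj_carrier by (simp add: minus_mat_def)
  show ?thesis unfolding spec_norm_def dc
  proof (rule cSup_eq_maximum)
    show "Lst \<in> {vnorm ((A - A * Prj) *\<^sub>v v) |v. v \<in> carrier_vec n \<and> vnorm v = 1}"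
    proof -
      obtain v where h: "v \<in> carrier_vec n" "vnorm v = 1" "vnorm ((A - A * Prj) *\<^sub>v v) = Lst"
        using attain[OF rep] by blast
      then have "Lst = vnorm ((A - A * Prj) *\<^sub>v v)" by simp
      then show ?thesis using h(1,2) by blast
    qed
  next
    fix t assume "t \<in> {vnorm ((A - A * Prj) *\<^sub>v v) |v. v \<in> carrier_vec n \<and> vnorm v = 1}"
    then obtain v where "v \<in> carrier_vec n" "vnorm v = 1" "t = vnorm ((A - A * Prj) *\<^sub>v v)" by auto
    then show "t \<le> Lst" using upper[OF rep] by simp
  qed
qed

lemma final:
  assumes rep: "\<exists>i<n. alg_mult A (lam i) > 1"
  shows "spec_norm (A - mat n (k + 1) (\<lambda>(i, j). x (j + 1) $ i) * pinv (mat n (k + 1) (\<lambda>(i, j). x j $ i)))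
     = Max {\<bar>lam i\<bar> | i. i < n \<and> alg_mult A (lam i) > 1}"
  using main_Prj[OF rep] Ahat_eq unfolding X0_def Y0_def Lst_def by simp

end

theorem theorem4:
  fixes A :: "real mat" and n :: nat and q :: "nat \<Rightarrow> real vec" and lam :: "nat \<Rightarrow> real"
    and x :: "nat \<Rightarrow> real vec" and k :: nat
  assumes A_carrier: "A \<in> carrier_mat n n"
    and A_sym: "transpose_mat A = A"
    and q_dim: "\<And>i. i < n \<Longrightarrow> q i \<in> carrier_vec n"
    and q_orthonormal: "\<And>i j. i < n \<Longrightarrow> j < n \<Longrightarrow> q i \<bullet> q j = (if i = j then 1 else 0)"
    and q_eig: "\<And>i. i < n \<Longrightarrow> A *\<^sub>v q i = lam i \<cdot>\<^sub>v q i"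
    and x0_dim: "x 0 \<in> carrier_vec n"
    and x0_generic: "\<And>i. i < n \<Longrightarrow> q i \<bullet> x 0 \<noteq> 0"
    and x_rec: "\<And>t. x (Suc t) = A *\<^sub>v x t"
    and repeated: "\<exists>i<n. alg_mult A (lam i) > 1"
    and k_ge: "k \<ge> card (lam ` {..<n})"
  shows "let X = mat n (k + 1) (\<lambda>(i, j). x j $ i);
             Y = mat n (k + 1) (\<lambda>(i, j). x (j + 1) $ i);
             Ahat = Y * pinv X;
             lamstar = Max {\<bar>lam i\<bar> | i. i < n \<and> alg_mult A (lam i) > 1}
         in spec_norm (A - Ahat) = lamstar"
proof -
  have st: "setting A n q lam x k"
    by (rule setting.intro[OF A_carrier A_sym q_dim q_orthonormal q_eig x0_dim x0_generic x_rec k_ge])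
  show ?thesis unfolding Let_def by (rule setting.final[OF st repeated])
qed

end
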